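(* Let $r\geqslant 2$ and $n\geqslant 2r-1$. Let $\pi,\beta\in\mathrm{Sym}_n$ with $w_H(\pi)=w_H(\beta)=2r-1$ and $Ts(\pi)=Ts(\beta)$. Suppose $\beta$ has a cycle $(y_1\,y_2\,\ldots\,y_t)$, and $\pi$ is obtained from $\beta$ by replacing this cycle with the two cycles $(y_1\,\ldots\,y_s)$ and $(y_{s+1}\,\ldots\,y_t)$ for some $2\leqslant s\leqslant t-2$, keeping all other cycles of $\beta$. Then $|N_1(\pi)|\geqslant|N_1(\beta)|$ and $|N_2(\pi)|\geqslant|N_2(\beta)|$.
   Context: $\mathrm{Sym}_n$ is the symmetric group on $[n]$, and $w_H(\pi)=|\{i:\pi(i)\neq i\}|$ is the Hamming weight. $Ts(\pi)=\{i:\pi(i)\neq i\}$ and $Tc(\pi)=\{(i,\pi(i)):\pi(i)\neq i\}$. For $\pi$ with $w_H(\pi)=2r-1$, define $N_1(\pi)=\{\sigma\in\mathrm{Sym}_n: Tc(\sigma)\subseteq Tc(\pi),\ |Tc(\sigma)|=r-1\}$, $N_2(\pi)=\{\sigma\in\mathrm{Sym}_n: Tc(\sigma)\subseteq Tc(\pi),\ |Tc(\sigma)|=r\}$, and $N_3(\pi)=\{\sigma\in\mathrm{Sym}_n: |Tc(\sigma)\cap Tc(\pi)|=r-1,\ |Tc(\sigma)|=r\}$. *)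

theory Defs
  imports "HOL-Combinatorics.Permutations"
begin

definition Sym :: "nat \<Rightarrow> (nat \<Rightarrow> nat) set" where
  "Sym n = {\<sigma>. \<sigma> permutes {1..n}}"

definition Ts :: "(nat \<Rightarrow> nat) \<Rightarrow> nat set" where
  "Ts p = {i. p i \<noteq> i}"

definition Tc :: "(nat \<Rightarrow> nat) \<Rightarrow> (nat \<times> nat) set" where
  "Tc p = {(i, p i) | i. p i \<noteq> i}"

definition wH :: "(nat \<Rightarrow> nat) \<Rightarrow> nat" where
  "wH p = card (Ts p)"

definition N1 :: "nat \<Rightarrow> nat \<Rightarrow> (nat \<Rightarrow> nat) \<Rightarrow> (nat \<Rightarrow> nat) set" where
  "N1 n r p = {\<sigma> \<in> Sym n. Tc \<sigma> \<subseteq> Tc p \<and> card (Tc \<sigma>) = r - 1}"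

definition N2 :: "nat \<Rightarrow> nat \<Rightarrow> (nat \<Rightarrow> nat) \<Rightarrow> (nat \<Rightarrow> nat) set" where
  "N2 n r p = {\<sigma> \<in> Sym n. Tc \<sigma> \<subseteq> Tc p \<and> card (Tc \<sigma>) = r}"

end

theory Submission
  imports Defs
begin

lemma Tc_sub: "Tc \<sigma> \<subseteq> Tc p \<longleftrightarrow> (\<forall>i. \<sigma> i \<noteq> i \<longrightarrow> \<sigma> i = p i)"
  unfolding Tc_def by auto

lemma card_Tc: "card (Tc \<sigma>) = card (Ts \<sigma>)"
proof -
  have "Tc \<sigma> = (\<lambda>i. (i, \<sigma> i)) ` Ts \<sigma>" unfolding Tc_def Ts_def by auto
  moreover have "inj_on (\<lambda>i. (i, \<sigma> i)) (Ts \<sigma>)" by (auto simp: inj_on_def)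
  ultimately show ?thesis by (simp add: card_image)
qed

lemma main:
  fixes n s k :: nat and \<pi> \<beta> :: "nat \<Rightarrow> nat" and y :: "nat list"
  assumes piS: "\<pi> \<in> Sym n"
    and dy: "distinct y"
    and bet: "\<forall>i < length y. \<beta> (y ! i) = y ! ((i + 1) mod length y)"
    and s2: "2 \<le> s" and st: "s + 2 \<le> length y"
    and pit: "\<forall>i < length y. \<pi> (y ! i) =
           (if i = s - 1 then y ! 0
            else if i = length y - 1 then y ! s
            else y ! (i + 1))"
    and off: "\<forall>x. x \<notin> set y \<longrightarrow> \<pi> x = \<beta> x"
  shows "card {\<sigma> \<in> Sym n. Tc \<sigma> \<subseteq> Tc \<beta> \<and> card (Tc \<sigma>) = k}
         \<le> card {\<sigma> \<in> Sym n. Tc \<sigma> \<subseteq> Tc \<pi> \<and> card (Tc \<sigma>) = k}"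
proof -
  define t where "t = length y"
  have pinj: "inj \<pi>" using piS unfolding Sym_def by (simp add: permutes_inj)
  have piy: "\<pi> x \<in> set y \<and> \<pi> x \<noteq> x" if "x \<in> set y" for x
  proof -
    from that obtain i where i: "i < t" "x = y ! i" unfolding t_def in_set_conv_nth by auto
    have pe: "\<pi> x = (if i = s - 1 then y ! 0 else if i = t - 1 then y ! s else y ! (i + 1))"
      using pit i(1) unfolding i(2) t_def by blast
    have "\<exists>j. j < t \<and> j \<noteq> i \<and> \<pi> x = y ! j"
    proof (cases "i = s - 1")
      case True
      have "0 < t" "0 \<noteq> i" using True s2 st unfolding t_def by (force, force)
      moreover have "\<pi> x = y ! 0" using pe True by simp
      ultimately show ?thesis by blast
    next
      case F: False
      show ?thesis
      proof (cases "i = t - 1")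
        case True
        have "s < t" "s \<noteq> i" using True s2 st unfolding t_def by auto
        moreover have "\<pi> x = y ! s" using pe True F by simp
        ultimately show ?thesis by blast
      next
        case False
        have "i + 1 < t" "i + 1 \<noteq> i" using False i(1) by simp_all
        moreover have "\<pi> x = y ! (i + 1)" using pe F False by simp
        ultimately show ?thesis by blast
      qed
    qed
    then obtain j where j: "j < t" "j \<noteq> i" "\<pi> x = y ! j" by blast
    have "y ! j \<noteq> y ! i" using j i dy unfolding t_def by (simp add: nth_eq_iff_index_eq)
    moreover have "y ! j \<in> set y" using j(1) unfolding t_def by simp
    ultimately show ?thesis using j i by simp
  qed
  define f where "f \<sigma> = (\<lambda>x. if \<sigma> x = x then x else \<pi> x)" for \<sigma> :: "nat \<Rightarrow> nat"
  let ?A = "{\<sigma> \<in> Sym n. Tc \<sigma> \<subseteq> Tc \<beta> \<and> card (Tc \<sigma>) = k}"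
  let ?B = "{\<sigma> \<in> Sym n. Tc \<sigma> \<subseteq> Tc \<pi> \<and> card (Tc \<sigma>) = k}"
  have finB: "finite ?B"
    by (rule finite_subset[of _ "{p. p permutes {1..n}}"]) (auto simp: Sym_def finite_permutations)
  have inj: "inj_on f ?A"
  proof (rule inj_onI)
    fix a b assume a: "a \<in> ?A" and b: "b \<in> ?A" and e: "f a = f b"
    have ma: "\<pi> x \<noteq> x" if "a x \<noteq> x" for x
    proof (cases "x \<in> set y")
      case True then show ?thesis using piy by simp
    next
      case False
      have "a x = \<beta> x" using a that unfolding Tc_sub by simp
      then show ?thesis using off False that by simp
    qed
    have mb: "\<pi> x \<noteq> x" if "b x \<noteq> x" for x
    proof (cases "x \<in> set y")
      case True then show ?thesis using piy by simp
    next
      case False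
      have "b x = \<beta> x" using b that unfolding Tc_sub by simp
      then show ?thesis using off False that by simp
    qed
    show "a = b"
    proof
      fix x
      have "f a x = f b x" using e by simp
      then have "(a x = x) = (b x = x)"
      proof -
        assume fe: "f a x = f b x"
        show ?thesis
        proof (cases "a x = x")
          case True
          then have "f b x = x" using fe unfolding f_def by simp
          then show ?thesis using True mb[of x] unfolding f_def by (auto split: if_splits)
        next
          case False
          then have "f b x \<noteq> x" using fe ma[of x] unfolding f_def by simp
          then show ?thesis using False unfolding f_def by (auto split: if_splits)
        qed
      qed
      then show "a x = b x" using a b unfolding Tc_sub by auto
    qed
  qed
  have img: "f ` ?A \<subseteq> ?B"
  proof
    fix g assume "g \<in> f ` ?A"
    then obtain \<sigma> where sA: "\<sigma> \<in> ?A" and g: "g = f \<sigma>" by auto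
    have sp: "\<sigma> permutes {1..n}" using sA by (simp add: Sym_def)
    have sinj: "inj \<sigma>" using sp by (simp add: permutes_inj)
    have sb: "\<And>i. \<sigma> i \<noteq> i \<Longrightarrow> \<sigma> i = \<beta> i" using sA unfolding Tc_sub by auto
    define M where "M = {x. \<sigma> x \<noteq> x}"
    have Msub: "M \<subseteq> {1..n}"
    proof
      fix x assume "x \<in> M"
      then have "\<sigma> x \<noteq> x" unfolding M_def by simp
      then show "x \<in> {1..n}" using permutes_not_in[OF sp, of x] by blast
    qed
    have finM: "finite M" using Msub finite_subset by blast
    have sM: "\<sigma> x \<in> M" if "x \<in> M" for x
    proof -
      have "\<sigma> (\<sigma> x) \<noteq> \<sigma> x"
      proof
        assume "\<sigma> (\<sigma> x) = \<sigma> x"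
        then have "\<sigma> x = x" using sinj by (simp add: inj_eq)
        then show False using that unfolding M_def by simp
      qed
      then show ?thesis unfolding M_def by simp
    qed
    have t4: "4 \<le> t" using s2 st unfolding t_def by simp
    have allM: "set y \<subseteq> M" if xy: "x \<in> set y" and xM: "x \<in> M" for x
    proof -
      obtain i where i: "i < t" "x = y ! i" using xy unfolding t_def by (auto simp: in_set_conv_nth)
      have P: "y ! ((i + d) mod t) \<in> M" for d
      proof (induction d)
        case 0
        then show ?case using i xM by simp
      next
        case (Suc d)
        define j where "j = (i + d) mod t"
        have jt: "j < t" using t4 unfolding j_def by simp
        have sj: "\<sigma> (y ! j) = y ! ((j + 1) mod t)"
          using sb[of "y ! j"] Suc bet jt unfolding j_def t_def M_def by auto
        have ne: "(j + 1) mod t \<noteq> j"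
        proof (cases "j + 1 < t")
          case True then show ?thesis by simp
        next
          case False then have "j + 1 = t" using jt by simp
          then show ?thesis using t4 by simp
        qed
        have "y ! ((j + 1) mod t) \<noteq> y ! j"
        proof -
          have "(j + 1) mod t < t" using t4 by simp
          then show ?thesis using nth_eq_iff_index_eq[OF dy, of "(j + 1) mod t" j] ne jt unfolding t_def by simp
        qed
        then have "y ! ((j + 1) mod t) \<in> M" using sM[of "y ! j"] Suc sj unfolding j_def by simp
        moreover have "(i + Suc d) mod t = (j + 1) mod t" unfolding j_def by (simp add: mod_Suc_eq)
        ultimately show ?case by simp
      qed
      show ?thesis
      proof
        fix z assume "z \<in> set y"
        then obtain m where m: "m < t" "z = y ! m" unfolding t_def by (auto simp: in_set_conv_nth)
        have "(i + (m + t - i)) mod t = m" using i m by simp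
        then show "z \<in> M" using P[of "m + t - i"] m by simp
      qed
    qed
    have piM: "\<pi> ` M \<subseteq> M"
    proof
      fix z assume "z \<in> \<pi> ` M"
      then obtain x where x: "x \<in> M" "z = \<pi> x" by auto
      show "z \<in> M"
      proof (cases "x \<in> set y")
        case True
        then show ?thesis using allM[OF True x(1)] piy[OF True] x by auto
      next
        case False
        then have "\<pi> x = \<sigma> x" using off sb x unfolding M_def by auto
        then show ?thesis using sM x by simp
      qed
    qed
    have piMM: "\<pi> ` M = M"
      using endo_inj_surj[OF finM piM] pinj by (simp add: inj_on_subset)
    have movM: "\<pi> x \<noteq> x" if "x \<in> M" for x
    proof (cases "x \<in> set y")
      case True then show ?thesis using piy by simp
    next
      case False then show ?thesis using off sb that unfolding M_def by auto
    qed
    have gM: "g x = (if x \<in> M then \<pi> x else x)" for x unfolding g f_def M_def by auto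
    have ginj: "inj g"
    proof (rule injI)
      fix a b assume "g a = g b"
      then show "a = b" using piM pinj unfolding gM
        by (auto split: if_splits simp: inj_eq)
    qed
    have gsurj: "\<exists>x. g x = z" for z
    proof (cases "z \<in> M")
      case True
      then obtain x where "x \<in> M" "z = \<pi> x" using piMM by blast
      then show ?thesis using gM by metis
    next
      case False then show ?thesis using gM by metis
    qed
    have gp: "g permutes {1..n}"
      unfolding permutes_def
    proof (intro conjI allI impI)
      fix x assume "x \<notin> {1..n}" then show "g x = x" using gM Msub by auto
    next
      fix z show "\<exists>!x. g x = z" using gsurj ginj by (metis injD)
    qed
    have Tsg: "Ts g = Ts \<sigma>" unfolding Ts_def using gM movM unfolding M_def by auto
    have gpi: "\<forall>i. g i \<noteq> i \<longrightarrow> g i = \<pi> i" using gM by auto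
    show "g \<in> ?B" using gp gpi Tsg sA unfolding Tc_sub by (simp add: Sym_def card_Tc)
  qed
  show ?thesis by (rule card_inj_on_le[OF inj img finB])
qed

theorem lemma11:
  fixes n r s :: nat and \<pi> \<beta> :: "nat \<Rightarrow> nat" and y :: "nat list"
  assumes "r \<ge> 2" and "n \<ge> 2 * r - 1"
    and "\<pi> \<in> Sym n" and "\<beta> \<in> Sym n"
    and "wH \<pi> = 2 * r - 1" and "wH \<beta> = 2 * r - 1"
    and "Ts \<pi> = Ts \<beta>"
    and "distinct y"
    and "\<forall>i < length y. \<beta> (y ! i) = y ! ((i + 1) mod length y)"
    and "2 \<le> s" and "s + 2 \<le> length y"
    and "\<forall>i < length y. \<pi> (y ! i) =
           (if i = s - 1 then y ! 0
            else if i = length y - 1 then y ! s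
            else y ! (i + 1))"
    and "\<forall>x. x \<notin> set y \<longrightarrow> \<pi> x = \<beta> x"
  shows "card (N1 n r \<pi>) \<ge> card (N1 n r \<beta>) \<and> card (N2 n r \<pi>) \<ge> card (N2 n r \<beta>)"
  unfolding N1_def N2_def
  using main[OF assms(3) assms(8) assms(9) assms(10) assms(11) assms(12) assms(13)] by blast

end
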